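(* Let $A>0$, $\phi>0$, $0<\gamma<1$, and $\alpha,\beta>0$ with $\alpha+\beta<1$. For $k,N>0$ define $n^*(k,N)=\frac{1-\alpha}{4\phi kN^{\gamma}}$ and $e^*(k,N)=\frac{2\alpha}{1-\alpha}\phi k^{2}N^{\gamma}$, and the map $F_C(k,N)=\big(A\,e^*(k,N)^{\alpha}k^{\beta},\ n^*(k,N)N\big)$. Let $(\bar k,\bar N)$ be the unique fixed point of $F_C$ with $\bar k,\bar N>0$. Write $\bar e=e^*(\bar k,\bar N)$ and let $$E_k=\frac{\partial e^*}{\partial k}(\bar k,\bar N)=\frac{4\alpha\phi}{1-\alpha}\bar k\bar N^{\gamma},\quad E_N=\frac{\partial e^*}{\partial N}(\bar k,\bar N)=\frac{2\alpha\gamma\phi}{1-\alpha}\bar k^{2}\bar N^{\gamma-1},$$ $$D_k=\frac{\partial n^*}{\partial k}(\bar k,\bar N)=-\frac{1-\alpha}{4\phi\bar k^{2}\bar N^{\gamma}},\quad D_N=\frac{\partial n^*}{\partial N}(\bar k,\bar N)=-\frac{\gamma(1-\alpha)}{4\phi\bar k\bar N^{\gamma+1}}.$$ Suppose $$1-\frac{\alpha\bar e^{\alpha-1}E_N\bar k^{\beta}D_k\bar N}{\alpha\bar e^{\alpha-1}E_k\bar k^{\beta}+\frac{\beta}{A}}-\frac{1}{A\alpha\bar e^{\alpha-1}E_k\bar k^{\beta}+\beta}<-D_N\bar N<1-\frac{A\alpha\bar e^{\alpha-1}E_N\bar k^{\beta}D_k\bar N}{1+A\alpha\bar e^{\alpha-1}E_k\bar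 k^{\beta}+\beta}$$ and $$A\alpha\bar e^{\alpha-1}E_k\bar k^{\beta}+\beta>1.$$ Then $(\bar k,\bar N)$ is locally asymptotically stable, i.e. both eigenvalues of the Jacobian matrix of $F_C$ at $(\bar k,\bar N)$ have modulus strictly less than $1$.
   Context: Overlapping-generations model with human capital $k_t$ and adult population $N_t$, in the case where parental childcare times are perfect complements; $n^*$ and $e^*$ are the household's optimal fertility and education spending and the dynamics are $(k_{t+1},N_{t+1})=F_C(k_t,N_t)$. The fixed point is $\bar k=(A^{1/\alpha}\alpha/2)^{\alpha/(1-\beta-\alpha)}$, $\bar N=\left(\frac{1-\alpha}{4\phi\bar k}\right)^{1/\gamma}$. *)

theory Defs
  imports "HOL-Analysis.Analysis"
begin

definition nstar :: "real \<Rightarrow> real \<Rightarrow> real \<Rightarrow> real \<Rightarrow> real \<Rightarrow> real" where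
  "nstar \<alpha> \<phi> \<gamma> k N = (1 - \<alpha>) / (4 * \<phi> * k * N powr \<gamma>)"

definition estar :: "real \<Rightarrow> real \<Rightarrow> real \<Rightarrow> real \<Rightarrow> real \<Rightarrow> real" where
  "estar \<alpha> \<phi> \<gamma> k N = (2 * \<alpha> / (1 - \<alpha>)) * \<phi> * k^2 * N powr \<gamma>"

definition FC_k :: "real \<Rightarrow> real \<Rightarrow> real \<Rightarrow> real \<Rightarrow> real \<Rightarrow> real \<Rightarrow> real \<Rightarrow> real" where
  "FC_k A \<alpha> \<beta> \<phi> \<gamma> k N = A * (estar \<alpha> \<phi> \<gamma> k N) powr \<alpha> * k powr \<beta>"

definition FC_N :: "real \<Rightarrow> real \<Rightarrow> real \<Rightarrow> real \<Rightarrow> real \<Rightarrow> real" where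
  "FC_N \<alpha> \<phi> \<gamma> k N = nstar \<alpha> \<phi> \<gamma> k N * N"

definition FC :: "real \<Rightarrow> real \<Rightarrow> real \<Rightarrow> real \<Rightarrow> real \<Rightarrow> real \<times> real \<Rightarrow> real \<times> real" where
  "FC A \<alpha> \<beta> \<phi> \<gamma> = (\<lambda>(k, N). (FC_k A \<alpha> \<beta> \<phi> \<gamma> k N, FC_N \<alpha> \<phi> \<gamma> k N))"

definition jac_FC :: "real \<Rightarrow> real \<Rightarrow> real \<Rightarrow> real \<Rightarrow> real \<Rightarrow> real \<Rightarrow> real \<Rightarrow> real^2^2" where
  "jac_FC A \<alpha> \<beta> \<phi> \<gamma> k N =
     vector [vector [deriv (\<lambda>x. FC_k A \<alpha> \<beta> \<phi> \<gamma> x N) k, deriv (\<lambda>y. FC_k A \<alpha> \<beta> \<phi> \<gamma> k y) N],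
             vector [deriv (\<lambda>x. FC_N \<alpha> \<phi> \<gamma> x N) k,     deriv (\<lambda>y. FC_N \<alpha> \<phi> \<gamma> k y) N]]"

definition eigenvalue2 :: "real^2^2 \<Rightarrow> complex \<Rightarrow> bool" where
  "eigenvalue2 J z \<longleftrightarrow>
     (of_real (J$1$1) - z) * (of_real (J$2$2) - z) - of_real (J$1$2) * of_real (J$2$1) = 0"

end

theory Submission imports Defs begin

lemma dE_k:
  assumes "\<alpha> < 1"
  shows "((\<lambda>x. estar \<alpha> \<phi> \<gamma> x N) has_real_derivative (4 * \<alpha> * \<phi> / (1 - \<alpha>) * k * N powr \<gamma>)) (at k)"
  proof -
  have "(\<lambda>x. estar \<alpha> \<phi> \<gamma> x N) = (\<lambda>x. (2 * \<alpha> / (1 - \<alpha>) * \<phi> * N powr \<gamma>) * x^2)"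
    unfolding estar_def by (auto simp: algebra_simps)
  moreover have "((\<lambda>x. (2 * \<alpha> / (1 - \<alpha>) * \<phi> * N powr \<gamma>) * x^2) has_real_derivative (2 * \<alpha> / (1 - \<alpha>) * \<phi> * N powr \<gamma>) * (2 * k)) (at k)"
    using DERIV_cmult[OF DERIV_pow[of 2 k], of "2 * \<alpha> / (1 - \<alpha>) * \<phi> * N powr \<gamma>"] by simp
  ultimately show ?thesis using assms by (simp add: field_simps)
qed

lemma dE_N:
  assumes "\<alpha> < 1" "N > 0"
  shows "((\<lambda>y. estar \<alpha> \<phi> \<gamma> k y) has_real_derivative (2 * \<alpha> * \<gamma> * \<phi> / (1 - \<alpha>) * k^2 * N powr (\<gamma> - 1))) (at N)"
  proof -
  have "(\<lambda>y. estar \<alpha> \<phi> \<gamma> k y) = (\<lambda>y. (2 * \<alpha> / (1 - \<alpha>) * \<phi> * k^2) * y powr \<gamma>)"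
    unfolding estar_def by (auto simp: algebra_simps)
  moreover have "((\<lambda>y. (2 * \<alpha> / (1 - \<alpha>) * \<phi> * k^2) * y powr \<gamma>) has_real_derivative (2 * \<alpha> / (1 - \<alpha>) * \<phi> * k^2) * (\<gamma> * N powr (\<gamma> - 1))) (at N)"
    by (intro DERIV_cmult has_real_derivative_powr assms)
  ultimately show ?thesis by (simp add: algebra_simps)
qed

lemma estar_pos: "0 < \<alpha> \<Longrightarrow> \<alpha> < 1 \<Longrightarrow> \<phi> > 0 \<Longrightarrow> k > 0 \<Longrightarrow> N > 0 \<Longrightarrow> estar \<alpha> \<phi> \<gamma> k N > 0"
  unfolding estar_def by simp

lemma J11:
  assumes "0 < \<alpha>" "\<alpha> < 1" "\<phi> > 0" "k > 0" "N > 0"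
  shows "deriv (\<lambda>x. FC_k A \<alpha> \<beta> \<phi> \<gamma> x N) k =
     A * (\<alpha> * estar \<alpha> \<phi> \<gamma> k N powr (\<alpha> - 1) * (4 * \<alpha> * \<phi> / (1 - \<alpha>) * k * N powr \<gamma>)) * k powr \<beta>
     + A * estar \<alpha> \<phi> \<gamma> k N powr \<alpha> * (\<beta> * k powr (\<beta> - 1))"
proof -
  have e: "((\<lambda>x. estar \<alpha> \<phi> \<gamma> x N powr \<alpha>) has_real_derivative
      \<alpha> * estar \<alpha> \<phi> \<gamma> k N powr (\<alpha> - 1) * (4 * \<alpha> * \<phi> / (1 - \<alpha>) * k * N powr \<gamma>)) (at k)"
    using DERIV_fun_powr[OF dE_k[OF assms(2)] estar_pos[OF assms], where r=\<alpha>] by simp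
  have "((\<lambda>x. FC_k A \<alpha> \<beta> \<phi> \<gamma> x N) has_real_derivative
     A * (\<alpha> * estar \<alpha> \<phi> \<gamma> k N powr (\<alpha> - 1) * (4 * \<alpha> * \<phi> / (1 - \<alpha>) * k * N powr \<gamma>)) * k powr \<beta>
     + A * estar \<alpha> \<phi> \<gamma> k N powr \<alpha> * (\<beta> * k powr (\<beta> - 1))) (at k)"
    unfolding FC_k_def
    using DERIV_mult[OF DERIV_cmult[OF e, of A] has_real_derivative_powr[OF assms(4), of \<beta>]]
    by (simp add: algebra_simps)
  thus ?thesis by (rule DERIV_imp_deriv)
qed

lemma J12:
  assumes "0 < \<alpha>" "\<alpha> < 1" "\<phi> > 0" "k > 0" "N > 0"
  shows "deriv (\<lambda>y. FC_k A \<alpha> \<beta> \<phi> \<gamma> k y) N =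
     A * (\<alpha> * estar \<alpha> \<phi> \<gamma> k N powr (\<alpha> - 1) * (2 * \<alpha> * \<gamma> * \<phi> / (1 - \<alpha>) * k^2 * N powr (\<gamma> - 1))) * k powr \<beta>"
proof -
  have e: "((\<lambda>y. estar \<alpha> \<phi> \<gamma> k y powr \<alpha>) has_real_derivative
      \<alpha> * estar \<alpha> \<phi> \<gamma> k N powr (\<alpha> - 1) * (2 * \<alpha> * \<gamma> * \<phi> / (1 - \<alpha>) * k^2 * N powr (\<gamma> - 1))) (at N)"
    using DERIV_fun_powr[OF dE_N[OF assms(2) assms(5)] estar_pos[OF assms], where r=\<alpha>] by simp
  show ?thesis unfolding FC_k_def
    using DERIV_cmult_right[OF DERIV_cmult[OF e, of A], of "k powr \<beta>"]
    by (intro DERIV_imp_deriv) (simp add: algebra_simps)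
qed

lemma J21:
  assumes "\<phi> > 0" "k > 0" "N > 0"
  shows "deriv (\<lambda>x. FC_N \<alpha> \<phi> \<gamma> x N) k = - (1 - \<alpha>) / (4 * \<phi> * k^2 * N powr \<gamma>) * N"
  unfolding FC_N_def nstar_def
  using assms
  by (intro DERIV_imp_deriv) (auto intro!: derivative_eq_intros simp: field_simps power2_eq_square)

lemma J22:
  assumes "\<phi> > 0" "k > 0" "N > 0"
  shows "deriv (\<lambda>y. FC_N \<alpha> \<phi> \<gamma> k y) N = 
     - (\<gamma> * (1 - \<alpha>)) / (4 * \<phi> * k * N powr (\<gamma> + 1)) * N + nstar \<alpha> \<phi> \<gamma> k N"
proof -
  have "((\<lambda>y. nstar \<alpha> \<phi> \<gamma> k y) has_real_derivative - (\<gamma> * (1 - \<alpha>)) / (4 * \<phi> * k * N powr (\<gamma> + 1))) (at N)"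
    unfolding nstar_def using assms has_real_derivative_powr[OF assms(3), of \<gamma>]
    by (auto intro!: derivative_eq_intros simp: field_simps powr_add powr_diff power2_eq_square)
  from DERIV_mult[OF this DERIV_ident] show ?thesis unfolding FC_N_def
    by (intro DERIV_imp_deriv) (simp add: algebra_simps)
qed


lemma quad_root_stable:
  fixes T D :: real and z :: complex
  assumes "D < 1" "1 - T + D > 0" "1 + T + D > 0"
    and eq: "z * z - of_real T * z + of_real D = 0"
  shows "cmod z < 1"
proof -
  obtain x y where z: "z = Complex x y" by (cases z)
  from eq have re: "x*x - y*y - T*x + D = 0" and im: "2*x*y - T*y = 0"
    unfolding z by (simp_all add: complex_eq_iff algebra_simps)
  have "x*x + y*y < 1"
  proof (cases "y = 0")
    case True
    with re have r: "x*x - T*x + D = 0" by simp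
    have "T < 2" "T > -2" using assms by linarith+
    show ?thesis
    proof (rule ccontr)
      assume "\<not> ?thesis"
      with True have "\<not> x^2 < 1" by (simp add: power2_eq_square)
      hence "\<not> \<bar>x\<bar> < 1" using abs_square_less_1 by blast
      hence "x \<ge> 1 \<or> x \<le> -1" by linarith
      then show False
      proof
        assume h: "x \<ge> 1"
        have "x*x - T*x + D = (1 - T + D) + (x - 1) * (x + 1 - T)" by (simp add: algebra_simps)
        moreover have "(x - 1) * (x + 1 - T) \<ge> 0" using h \<open>T < 2\<close> by simp
        ultimately show False using r assms by linarith
      next
        assume h: "x \<le> -1"
        have "x*x - T*x + D = (1 + T + D) + (x + 1) * (x - 1 - T)" by (simp add: algebra_simps)
        moreover have "(x + 1) * (x - 1 - T) \<ge> 0" using h \<open>T > -2\<close> by (simp add: mult_nonpos_nonpos)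
        ultimately show False using r assms by linarith
      qed
    qed
  next
    case False
    have "(2*x - T) * y = 0" using im by (simp add: algebra_simps)
    with False have t: "2*x - T = 0" by simp
    have "y*y = x*x - T*x + D" using re by linarith
    hence "x*x + y*y = x*(2*x - T) + D" by (simp add: algebra_simps)
    with t have "x*x + y*y = D" by simp
    with assms show ?thesis by simp
  qed
  thus ?thesis unfolding z cmod_def by (simp add: power2_eq_square)
qed
lemma aux_mul: "(a::real) > 0 \<Longrightarrow> (1 + c / a - 1 / a) * a = a + c - 1"
  by (simp add: field_simps)

theorem proposition4:
  fixes A \<phi> \<gamma> \<alpha> \<beta> kb Nb :: real
  assumes A_pos: "A > 0" and phi_pos: "\<phi> > 0"
    and gam: "0 < \<gamma>" "\<gamma> < 1"
    and alpha_pos: "\<alpha> > 0" and beta_pos: "\<beta> > 0" and ab: "\<alpha> + \<beta> < 1"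
    and kb_pos: "kb > 0" and Nb_pos: "Nb > 0"
    and fixpt: "FC A \<alpha> \<beta> \<phi> \<gamma> (kb, Nb) = (kb, Nb)"
  defines "eb \<equiv> estar \<alpha> \<phi> \<gamma> kb Nb"
    and "Ek \<equiv> 4 * \<alpha> * \<phi> / (1 - \<alpha>) * kb * Nb powr \<gamma>"
    and "EN \<equiv> 2 * \<alpha> * \<gamma> * \<phi> / (1 - \<alpha>) * kb^2 * Nb powr (\<gamma> - 1)"
    and "Dk \<equiv> - (1 - \<alpha>) / (4 * \<phi> * kb^2 * Nb powr \<gamma>)"
    and "DN \<equiv> - (\<gamma> * (1 - \<alpha>)) / (4 * \<phi> * kb * Nb powr (\<gamma> + 1))"
  assumes cond1: "1 - (\<alpha> * eb powr (\<alpha> - 1) * EN * kb powr \<beta> * Dk * Nb)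
                      / (\<alpha> * eb powr (\<alpha> - 1) * Ek * kb powr \<beta> + \<beta> / A)
                    - 1 / (A * \<alpha> * eb powr (\<alpha> - 1) * Ek * kb powr \<beta> + \<beta>)
                  < - DN * Nb"
    and cond2: "- DN * Nb < 1 - (A * \<alpha> * eb powr (\<alpha> - 1) * EN * kb powr \<beta> * Dk * Nb)
                      / (1 + A * \<alpha> * eb powr (\<alpha> - 1) * Ek * kb powr \<beta> + \<beta>)"
    and cond3: "A * \<alpha> * eb powr (\<alpha> - 1) * Ek * kb powr \<beta> + \<beta> > 1"
  shows "\<forall>z. eigenvalue2 (jac_FC A \<alpha> \<beta> \<phi> \<gamma> kb Nb) z \<longrightarrow> cmod z < 1"
proof -
  have a1: "\<alpha> < 1" using ab beta_pos by linarith
  have H1: "A * eb powr \<alpha> * kb powr \<beta> = kb"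
    using fixpt unfolding FC_def FC_k_def eb_def by simp
  have H2': "nstar \<alpha> \<phi> \<gamma> kb Nb * Nb = Nb"
    using fixpt unfolding FC_def FC_N_def by simp
  have H2: "nstar \<alpha> \<phi> \<gamma> kb Nb = 1" using H2' Nb_pos by simp
  have ebpos: "eb > 0" unfolding eb_def using estar_pos alpha_pos a1 phi_pos kb_pos Nb_pos by blast
  have pg: "Nb powr \<gamma> > 0" using Nb_pos by simp
  have ebm: "eb powr (\<alpha> - 1) = eb powr \<alpha> / eb" using ebpos by (simp add: powr_diff)
  have kbm: "kb powr (\<beta> - 1) = kb powr \<beta> / kb" using kb_pos by (simp add: powr_diff)
  have Ek_eq: "Ek = 2 * eb / kb"
    unfolding Ek_def eb_def estar_def using kb_pos a1 by (simp add: field_simps power2_eq_square)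
  have EN_eq: "EN = \<gamma> * eb / Nb"
    unfolding EN_def eb_def estar_def using Nb_pos a1 by (simp add: field_simps powr_diff)
  have nst: "(1 - \<alpha>) / (4 * \<phi> * kb * Nb powr \<gamma>) = 1" using H2 unfolding nstar_def .
  have Dk_eq: "Dk = - 1 / kb"
  proof -
    have "Dk = - ((1 - \<alpha>) / (4 * \<phi> * kb * Nb powr \<gamma>)) / kb"
      unfolding Dk_def by (simp add: power2_eq_square mult.assoc mult.commute mult.left_commute minus_divide_left)
    thus ?thesis using nst by simp
  qed
  have DN_eq: "DN = - \<gamma> / Nb"
  proof -
    have "DN = - \<gamma> * ((1 - \<alpha>) / (4 * \<phi> * kb * Nb powr \<gamma>)) / Nb"
      unfolding DN_def using Nb_pos by (simp add: powr_add field_simps)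
    thus ?thesis using nst by simp
  qed
  have P: "A * \<alpha> * eb powr (\<alpha> - 1) * Ek * kb powr \<beta> = 2 * \<alpha>"
  proof -
    have "A * \<alpha> * eb powr (\<alpha> - 1) * Ek * kb powr \<beta> = 2 * \<alpha> * (A * eb powr \<alpha> * kb powr \<beta>) / kb"
      unfolding ebm Ek_eq using ebpos by (simp add: field_simps)
    thus ?thesis using H1 kb_pos by simp
  qed
  have Q: "A * \<alpha> * eb powr (\<alpha> - 1) * EN * kb powr \<beta> = \<alpha> * \<gamma> * kb / Nb"
  proof -
    have "A * \<alpha> * eb powr (\<alpha> - 1) * EN * kb powr \<beta> = \<alpha> * \<gamma> * (A * eb powr \<alpha> * kb powr \<beta>) / Nb"
      unfolding ebm EN_eq using ebpos by (simp add: field_simps)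
    thus ?thesis using H1 by simp
  qed
  have J11v: "deriv (\<lambda>x. FC_k A \<alpha> \<beta> \<phi> \<gamma> x Nb) kb = 2 * \<alpha> + \<beta>"
  proof -
    have "deriv (\<lambda>x. FC_k A \<alpha> \<beta> \<phi> \<gamma> x Nb) kb = A * \<alpha> * eb powr (\<alpha> - 1) * Ek * kb powr \<beta>
         + \<beta> * (A * eb powr \<alpha> * kb powr \<beta>) / kb"
      unfolding J11[OF alpha_pos a1 phi_pos kb_pos Nb_pos] kbm eb_def[symmetric] Ek_def[symmetric]
      by (simp add: algebra_simps)
    thus ?thesis using P H1 kb_pos by simp
  qed
  have J12v: "deriv (\<lambda>y. FC_k A \<alpha> \<beta> \<phi> \<gamma> kb y) Nb = \<alpha> * \<gamma> * kb / Nb"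
    unfolding J12[OF alpha_pos a1 phi_pos kb_pos Nb_pos] eb_def[symmetric] EN_def[symmetric] Q[symmetric]
    by (simp add: algebra_simps)
  have J21v: "deriv (\<lambda>x. FC_N \<alpha> \<phi> \<gamma> x Nb) kb = - Nb / kb"
    unfolding J21[OF phi_pos kb_pos Nb_pos] Dk_def[symmetric] Dk_eq by simp
  have J22v: "deriv (\<lambda>y. FC_N \<alpha> \<phi> \<gamma> kb y) Nb = 1 - \<gamma>"
    unfolding J22[OF phi_pos kb_pos Nb_pos] DN_def[symmetric] DN_eq H2 using Nb_pos by simp
  have c1: "2 * \<alpha> + \<beta> - 1 < \<gamma> * (\<alpha> + \<beta>)"
  proof -
    have t: "(\<alpha> * eb powr (\<alpha> - 1) * EN * kb powr \<beta> * Dk * Nb)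
                      / (\<alpha> * eb powr (\<alpha> - 1) * Ek * kb powr \<beta> + \<beta> / A) = - \<alpha> * \<gamma> / (2 * \<alpha> + \<beta>)"
    proof -
      have e1: "\<alpha> * eb powr (\<alpha> - 1) * EN * kb powr \<beta> = (\<alpha> * \<gamma> * kb / Nb) / A"
        using Q A_pos Nb_pos by (simp add: field_simps)
      have e2: "\<alpha> * eb powr (\<alpha> - 1) * Ek * kb powr \<beta> = 2 * \<alpha> / A"
        using P A_pos by (simp add: field_simps)
      have "2 * \<alpha> + \<beta> > 0" using alpha_pos beta_pos by simp
      then show ?thesis using A_pos kb_pos Nb_pos unfolding e1 e2 Dk_eq
        by (simp add: field_simps)
    qed
    have "1 + \<alpha> * \<gamma> / (2 * \<alpha> + \<beta>) - 1 / (2 * \<alpha> + \<beta>) < \<gamma>"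
      using cond1 unfolding t P DN_eq using Nb_pos by simp
    moreover have apos: "2 * \<alpha> + \<beta> > 0" using alpha_pos beta_pos by simp
    ultimately have "(1 + \<alpha> * \<gamma> / (2 * \<alpha> + \<beta>) - 1 / (2 * \<alpha> + \<beta>)) * (2 * \<alpha> + \<beta>) < \<gamma> * (2 * \<alpha> + \<beta>)"
      by (rule mult_strict_right_mono)
    moreover have "(1 + \<alpha> * \<gamma> / (2 * \<alpha> + \<beta>) - 1 / (2 * \<alpha> + \<beta>)) * (2 * \<alpha> + \<beta>) = (2 * \<alpha> + \<beta>) + \<alpha> * \<gamma> - 1"
      using aux_mul[OF apos] .
    ultimately have "(2 * \<alpha> + \<beta>) + \<alpha> * \<gamma> - 1 < \<gamma> * (2 * \<alpha> + \<beta>)" by simp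
    thus ?thesis by (simp add: algebra_simps)
  qed
  define T where "T = 2 * \<alpha> + \<beta> + (1 - \<gamma>)"
  define D where "D = (2 * \<alpha> + \<beta>) * (1 - \<gamma>) + \<alpha> * \<gamma>"
  have "D < 1" using c1 unfolding D_def by (simp add: algebra_simps)
  moreover have "1 - T + D > 0"
  proof -
    have "1 - T + D = \<gamma> * (1 - \<alpha> - \<beta>)" unfolding T_def D_def by (simp add: algebra_simps)
    thus ?thesis using gam ab by simp
  qed
  moreover have "1 + T + D > 0"
  proof -
    have "D > 0" unfolding D_def using gam alpha_pos beta_pos by (simp add: add_pos_pos)
    moreover have "T > 0" unfolding T_def using gam alpha_pos beta_pos by simp
    ultimately show ?thesis by simp
  qed
  ultimately have st: "\<And>z. z * z - of_real T * z + of_real D = 0 \<Longrightarrow> cmod z < 1"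
    using quad_root_stable by blast
  show ?thesis
  proof (intro allI impI)
    fix z assume "eigenvalue2 (jac_FC A \<alpha> \<beta> \<phi> \<gamma> kb Nb) z"
    hence "(of_real (2 * \<alpha> + \<beta>) - z) * (of_real (1 - \<gamma>) - z)
             - of_real (\<alpha> * \<gamma> * kb / Nb) * of_real (- Nb / kb) = 0"
      unfolding eigenvalue2_def jac_FC_def using J11v J12v J21v J22v by simp
    moreover have "of_real (\<alpha> * \<gamma> * kb / Nb) * of_real (- Nb / kb) = (of_real (- \<alpha> * \<gamma>) :: complex)"
    proof -
      have "(\<alpha> * \<gamma> * kb / Nb) * (- Nb / kb) = - \<alpha> * \<gamma>" using kb_pos Nb_pos by (simp add: field_simps)
      thus ?thesis by (metis of_real_mult)
    qed
    ultimately have "z * z - of_real T * z + of_real D = 0"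
      unfolding T_def D_def by (simp add: algebra_simps)
    thus "cmod z < 1" by (rule st)
  qed
qed

end
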